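(* Let $\mathcal{U}\subset\mathbb{R}^n\times\mathbb{R}^p$ be open, $\mathcal{D}\subset\mathcal{U}$ nonempty, $\Gamma:\mathcal{D}\times\mathbb{R}^m\rightrightarrows\mathbb{R}^q$ with $\Gamma(\xi,\cdot)$ positively homogeneous for all $\xi\in\mathcal{D}$, and $\mathcal{A}:\mathcal{U}\to\mathbb{R}^{q\times m}$. Suppose that $\Gamma$ is polyhedral. Then $\Gamma$ is outer semicontinuous, and for every $\bar\xi\in\mathcal{D}$, with $H:=\Gamma(\bar\xi,\cdot)$, $\mathcal{Z}:=\mathrm{bd}\,\mathbb{B}\cap\mathrm{dom}\,H$ and $\mathcal{Z}_0:=\{z\in\mathcal{Z}\mid 0\in\mathcal{A}(\bar\xi)z+H(z)\}$, the following hold: the set $\mathcal{A}(\bar\xi)\,\mathrm{dom}\,H$ is closed; and there exists $c\ge0$ such that for every $z\in\mathcal{Z}_0$ there are $\varepsilon,\delta>0$ with \[\Gamma(\xi,z')\cap\delta\mathbb{B}\subset\Gamma(\bar\xi,z')+c\|\xi-\bar\xi\|\mathbb{B}\quad\text{whenever }(\xi,z')\in(\mathcal{D}\times\mathrm{bd}\,\mathbb{B})\cap((\bar\xi,z)+\varepsilon\mathbb{B}).\]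
   Context: $\mathbb{B}$ is the closed unit ball and $\mathrm{bd}$ the boundary. A set-valued map $H$ is positively homogeneous if $H(\gamma z)=\gamma H(z)$ for all $\gamma>0$. $\Gamma$ is polyhedral if its graph $\{(\xi,z,\eta)\mid\eta\in\Gamma(\xi,z)\}$ is a finite union of convex polyhedra. $\Gamma$ is outer semicontinuous if $\limsup_{(\xi',z')\to(\xi,z)}\Gamma(\xi',z')\subset\Gamma(\xi,z)$ (Painlevé–Kuratowski) for all $(\xi,z)\in\mathcal{D}\times\mathbb{R}^m$. *)

theory Defs
  imports "HOL-Analysis.Analysis"
begin

definition graph_sv :: "'x set \<Rightarrow> ('x \<Rightarrow> 'z \<Rightarrow> 'w set) \<Rightarrow> ('x \<times> 'z \<times> 'w) set" where
  "graph_sv D \<Gamma> = {(\<xi>, z, \<eta>). \<xi> \<in> D \<and> \<eta> \<in> \<Gamma> \<xi> z}"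

definition polyhedral_sv :: "('x::euclidean_space) set \<Rightarrow> ('x \<Rightarrow> ('z::euclidean_space) \<Rightarrow> ('w::euclidean_space) set) \<Rightarrow> bool" where
  "polyhedral_sv D \<Gamma> \<longleftrightarrow> (\<exists>F. finite F \<and> (\<forall>P\<in>F. polyhedron P) \<and> graph_sv D \<Gamma> = \<Union>F)"

definition dom_sv :: "('z \<Rightarrow> 'w set) \<Rightarrow> 'z set" where
  "dom_sv H = {z. H z \<noteq> {}}"

definition outer_semicontinuous_sv :: "('x::metric_space) set \<Rightarrow> ('x \<Rightarrow> ('z::metric_space) \<Rightarrow> ('w::metric_space) set) \<Rightarrow> bool" where
  "outer_semicontinuous_sv D \<Gamma> \<longleftrightarrow>
     (\<forall>\<xi>\<in>D. \<forall>z \<eta>. (\<exists>xs zs ys. (\<forall>k. xs k \<in> D \<and> ys k \<in> \<Gamma> (xs k) (zs k)) \<and>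
          xs \<longlonglongrightarrow> \<xi> \<and> zs \<longlonglongrightarrow> z \<and> ys \<longlonglongrightarrow> \<eta>) \<longrightarrow> \<eta> \<in> \<Gamma> \<xi> z)"

end

theory Submission
  imports Defs
begin

lemma aux_grow:
  fixes g t :: "nat \<Rightarrow> real"
  assumes g: "g \<longlonglongrightarrow> l" and l: "l > 0" and t: "\<And>k. t k > real k"
  shows "eventually (\<lambda>k. t k * g k > M) sequentially"
proof -
  have e1: "eventually (\<lambda>k. g k > l/2) sequentially"
  proof -
    have "l/2 < l" using l by simp
    from order_tendstoD(1)[OF g this] show ?thesis .
  qed
  obtain N :: nat where N: "real N \<ge> 2 * \<bar>M\<bar> / l" using real_arch_simple by blast
  have e2: "eventually (\<lambda>k. real k \<ge> 2 * \<bar>M\<bar> / l) sequentially"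
    unfolding eventually_sequentially
  proof (intro exI allI impI)
    fix n assume "N \<le> n"
    then have "real N \<le> real n" by simp
    then show "2 * \<bar>M\<bar> / l \<le> real n" using N by linarith
  qed
  show ?thesis
    using e1 e2
  proof eventually_elim
    case (elim k)
    have tk: "t k > 0" using t[of k] by linarith
    have "t k * g k > t k * (l/2)" using elim tk by simp
    moreover have "t k * (l/2) \<ge> real k * (l/2)" using t[of k] l by simp
    moreover have "real k * (l/2) \<ge> \<bar>M\<bar>"
      using elim(2) l by (simp add: field_simps)
    ultimately show ?case by linarith
  qed
qed

lemma min_norm_bounded:
  fixes L :: "'a::euclidean_space \<Rightarrow> 'b::euclidean_space"
  assumes L: "linear L" and fin: "finite F" and P: "P = \<Inter>F"
    and hs: "\<forall>h\<in>F. \<exists>a b. h = {x. a \<bullet> x \<le> b}"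
  shows "bounded {x\<in>P. norm (L x) \<le> R \<and> (\<forall>x'\<in>P. L x' = L x \<longrightarrow> norm x \<le> norm x')}"
    (is "bounded ?S")
proof (rule ccontr)
  assume nb: "\<not> bounded ?S"
  have "\<forall>k::nat. \<exists>x. x \<in> ?S \<and> norm x > real k + 1"
  proof
    fix k :: nat
    from nb have "\<not> (\<forall>x\<in>?S. norm x \<le> real k + 1)" unfolding bounded_iff by blast
    then show "\<exists>x. x \<in> ?S \<and> norm x > real k + 1" by (auto simp: not_le)
  qed
  from choice[OF this] obtain xs where xs: "\<forall>k. xs k \<in> ?S \<and> norm (xs k) > real k + 1"
    by blast
  have xsS: "\<And>k. xs k \<in> ?S" and xsn: "\<And>k. norm (xs k) > real k + 1"
    using xs by auto
  define v where "v k = xs k /\<^sub>R norm (xs k)" for k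
  have nz: "norm (xs k) > 0" for k using xsn[of k] using of_nat_0_le_iff[of k] by linarith
  have vs: "v k \<in> sphere 0 1" for k using nz[of k] by (simp add: v_def)
  have vs': "\<forall>n. v n \<in> sphere 0 1" using vs by blast
  obtain u r where u: "u \<in> sphere 0 1" and r: "strict_mono r" and vu: "(v \<circ> r) \<longlonglongrightarrow> u"
    using seq_compactE[OF compact_imp_seq_compact[OF compact_sphere[of "0::'a" 1]] vs'] by blast
  define X where "X k = xs (r k)" for k
  define V where "V k = v (r k)" for k
  have "V = v \<circ> r" by (rule ext) (simp add: V_def)
  then have Vu: "V \<longlonglongrightarrow> u" using vu by simp
  have XS: "X k \<in> ?S" for k using xsS by (simp add: X_def)
  have Xn: "norm (X k) > real k" for k
    using xsn[of "r k"] seq_suble[OF r, of k] unfolding X_def by linarith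
  have XV: "X k = norm (X k) *\<^sub>R V k" for k
    using nz[of "r k"] by (simp add: X_def V_def v_def)
  have un: "norm u = 1" using u by simp
  have bl: "bounded_linear L" using L linear_conv_bounded_linear by blast
  have Lu: "L u = 0"
  proof (rule ccontr)
    assume "L u \<noteq> 0"
    then have pos: "norm (L u) > 0" by simp
    have "(\<lambda>k. norm (L (V k))) \<longlonglongrightarrow> norm (L u)"
      by (intro tendsto_intros bounded_linear.tendsto[OF bl] Vu)
    from aux_grow[OF this pos Xn, of R]
    have "eventually (\<lambda>k. norm (L (X k)) > R) sequentially"
    proof (rule eventually_mono)
      fix k assume a: "norm (X k) * norm (L (V k)) > R"
      have "L (X k) = L (norm (X k) *\<^sub>R V k)" using XV[of k] by (rule arg_cong)
      also have "\<dots> = norm (X k) *\<^sub>R L (V k)" by (rule linear_scale[OF L])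
      finally show "norm (L (X k)) > R" using a by simp
    qed
    then obtain k where "norm (L (X k)) > R" unfolding eventually_sequentially by blast
    with XS[of k] show False by simp
  qed
  have hu: "\<And>a b. {x. a \<bullet> x \<le> b} \<in> F \<Longrightarrow> a \<bullet> u \<le> 0"
  proof (rule ccontr)
    fix a b assume hF: "{x. a \<bullet> x \<le> b} \<in> F" and "\<not> a \<bullet> u \<le> 0"
    then have pos: "a \<bullet> u > 0" by simp
    have "(\<lambda>k. a \<bullet> V k) \<longlonglongrightarrow> a \<bullet> u" by (intro tendsto_intros Vu)
    from aux_grow[OF this pos Xn, of b]
    have "eventually (\<lambda>k. a \<bullet> X k > b) sequentially"
    proof (rule eventually_mono)
      fix k assume a: "norm (X k) * (a \<bullet> V k) > b"
      have "a \<bullet> X k = a \<bullet> (norm (X k) *\<^sub>R V k)" using XV[of k] by (rule arg_cong)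
      then show "a \<bullet> X k > b" using a by simp
    qed
    then obtain k where "a \<bullet> X k > b" unfolding eventually_sequentially by blast
    moreover have "X k \<in> {x. a \<bullet> x \<le> b}" using XS[of k] hF P by blast
    ultimately show False by simp
  qed
  have ev1: "\<forall>h\<in>F. eventually (\<lambda>k. X k - u \<in> h) sequentially"
  proof
    fix h assume hF: "h \<in> F"
    then obtain a b where h: "h = {x. a \<bullet> x \<le> b}" using hs by blast
    have Xh: "a \<bullet> X k \<le> b" for k using XS[of k] hF P h by blast
    have "a \<bullet> u \<le> 0" using hu hF h by blast
    show "eventually (\<lambda>k. X k - u \<in> h) sequentially"
    proof (cases "a \<bullet> u = 0")
      case True
      then show ?thesis using Xh by (simp add: h inner_diff_right)
    next
      case False
      then have pos: "- (a \<bullet> u) > 0" using \<open>a \<bullet> u \<le> 0\<close> by simp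
      have "(\<lambda>k. - (a \<bullet> V k)) \<longlonglongrightarrow> - (a \<bullet> u)" by (intro tendsto_intros Vu)
      from aux_grow[OF this pos Xn, of "- (b + a \<bullet> u)"]
      show ?thesis
      proof (rule eventually_mono)
        fix k assume a: "norm (X k) * - (a \<bullet> V k) > - (b + a \<bullet> u)"
        have "a \<bullet> X k = a \<bullet> (norm (X k) *\<^sub>R V k)" using XV[of k] by (rule arg_cong)
        then have "a \<bullet> X k < b + a \<bullet> u" using a by simp
        then show "X k - u \<in> h" by (simp add: h inner_diff_right)
      qed
    qed
  qed
  have ev2: "eventually (\<lambda>k. X k \<bullet> u > 1/2) sequentially"
  proof -
    have "(\<lambda>k. V k \<bullet> u) \<longlonglongrightarrow> u \<bullet> u" by (intro tendsto_intros Vu)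
    moreover have "u \<bullet> u = 1" using un by (simp add: dot_square_norm)
    ultimately have "(\<lambda>k. V k \<bullet> u) \<longlonglongrightarrow> 1" by simp
    from aux_grow[OF this zero_less_one Xn, of "1/2"]
    show ?thesis
    proof (rule eventually_mono)
      fix k assume a: "norm (X k) * (V k \<bullet> u) > 1/2"
      have "X k \<bullet> u = (norm (X k) *\<^sub>R V k) \<bullet> u" using XV[of k] by (rule arg_cong)
      then show "X k \<bullet> u > 1/2" using a by simp
    qed
  qed
  have "eventually (\<lambda>k. (\<forall>h\<in>F. X k - u \<in> h) \<and> X k \<bullet> u > 1/2) sequentially"
    using eventually_ball_finite[OF fin ev1] ev2 by (simp add: eventually_conj)
  then obtain N where N: "\<forall>n\<ge>N. (\<forall>h\<in>F. X n - u \<in> h) \<and> X n \<bullet> u > 1/2"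
    unfolding eventually_sequentially by blast
  define k where "k = N"
  have k1: "\<forall>h\<in>F. X k - u \<in> h" and k2: "X k \<bullet> u > 1/2" using N by (auto simp: k_def)
  have inP: "X k - u \<in> P" using k1 P by blast
  have sameL: "L (X k - u) = L (X k)" using Lu L by (simp add: linear_diff)
  have "(norm (X k - u))\<^sup>2 = (norm (X k))\<^sup>2 - 2 * (X k \<bullet> u) + (norm u)\<^sup>2"
    by (simp add: power2_norm_eq_inner inner_diff_left inner_diff_right inner_commute)
  then have "(norm (X k - u))\<^sup>2 < (norm (X k))\<^sup>2" using k2 un by simp
  then have "norm (X k - u) < norm (X k)"
    using power2_less_imp_less[OF _ norm_ge_zero] by blast
  moreover have "norm (X k) \<le> norm (X k - u)"
  proof -
    have mn: "\<forall>x'\<in>P. L x' = L (X k) \<longrightarrow> norm (X k) \<le> norm x'" using XS[of k] by simp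
    show ?thesis using mn[rule_format, OF inP sameL] .
  qed
  ultimately show False by simp
qed


lemma closed_linear_image_polyhedron:
  fixes L :: "'a::euclidean_space \<Rightarrow> 'b::euclidean_space"
  assumes L: "linear L" and P: "polyhedron P"
  shows "closed (L ` P)"
proof -
  obtain F where fin: "finite F" and PF: "P = \<Inter>F"
    and hs0: "\<forall>h\<in>F. \<exists>a b. a \<noteq> 0 \<and> h = {x. a \<bullet> x \<le> b}"
    using P unfolding polyhedron_def by blast
  have hs: "\<forall>h\<in>F. \<exists>a b. h = {x. a \<bullet> x \<le> b}" using hs0 by blast
  have clP: "closed P" using P by (rule polyhedron_imp_closed)
  have bl: "bounded_linear L" using L linear_conv_bounded_linear by blast
  have contL: "continuous_on UNIV L" using linear_continuous_on[OF bl] .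
  show ?thesis
    unfolding closed_sequential_limits
  proof (intro allI impI, elim conjE)
    fix y :: "nat \<Rightarrow> 'b" and l
    assume yP: "\<forall>n. y n \<in> L ` P" and yl: "y \<longlonglongrightarrow> l"
    obtain R where R0: "\<forall>z\<in>range y. norm z \<le> R"
      using convergent_imp_bounded[OF yl] unfolding bounded_iff by blast
    have R: "norm (y n) \<le> R" for n using R0 by simp
    let ?S = "{x\<in>P. norm (L x) \<le> R \<and> (\<forall>x'\<in>P. L x' = L x \<longrightarrow> norm x \<le> norm x')}"
    have "\<exists>x. x \<in> ?S \<and> L x = y n" for n
    proof -
      let ?T = "P \<inter> {x. L x = y n}"
      have "closed ?T"
        by (intro closed_Int clP closed_Collect_eq contL continuous_on_const)
      moreover have "?T \<noteq> {}"
      proof -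
        obtain x0 where "x0 \<in> P" "y n = L x0" using yP by blast
        then have "x0 \<in> ?T" by simp
        then show ?thesis by auto
      qed
      ultimately obtain x where xT: "x \<in> ?T" and mn: "\<And>x'. x' \<in> ?T \<Longrightarrow> dist 0 x \<le> dist 0 x'"
        by (rule distance_attains_inf[where a=0]) blast
      have xP: "x \<in> P" and Lx: "L x = y n" using xT by auto
      have "\<forall>x'\<in>P. L x' = L x \<longrightarrow> norm x \<le> norm x'"
      proof (intro ballI impI)
        fix x' assume "x' \<in> P" "L x' = L x"
        then have "x' \<in> ?T" using Lx by simp
        from mn[OF this] show "norm x \<le> norm x'" by simp
      qed
      then show ?thesis using xP Lx R[of n] by (intro exI[of _ x]) simp
    qed
    from choice[OF allI[OF this]] obtain x where x: "\<forall>n. x n \<in> ?S \<and> L (x n) = y n"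
      by (rule exE)
    have "bounded ?S" by (rule min_norm_bounded[OF L fin PF hs])
    then obtain M where M: "\<forall>z\<in>?S. norm z \<le> M"
      unfolding bounded_iff by (rule exE)
    have xK: "x n \<in> P \<inter> cball 0 M" for n
    proof -
      have xS: "x n \<in> ?S" using x by (rule allE) (erule conjunct1)
      then have "x n \<in> P" by simp
      moreover have "norm (x n) \<le> M" using bspec[OF M xS] .
      ultimately show ?thesis by simp
    qed
    have "compact (P \<inter> cball 0 M)" by (intro closed_Int_compact clP compact_cball)
    note cs = seq_compactE[OF compact_imp_seq_compact[OF this]]
    have xK': "\<forall>n. x n \<in> P \<inter> cball 0 M" using xK by blast
    obtain xl r where xl: "xl \<in> P \<inter> cball 0 M" and r: "strict_mono r"
      and xr: "(x \<circ> r) \<longlonglongrightarrow> xl"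
      by (rule cs[OF xK'])
    have "(\<lambda>n. L ((x \<circ> r) n)) \<longlonglongrightarrow> L xl"
      by (rule bounded_linear.tendsto[OF bl xr])
    moreover have "(\<lambda>n. L ((x \<circ> r) n)) = y \<circ> r" using x by (simp add: comp_def)
    moreover have "(y \<circ> r) \<longlonglongrightarrow> l" using LIMSEQ_subseq_LIMSEQ[OF yl r] .
    ultimately have "(y \<circ> r) \<longlonglongrightarrow> L xl" by simp
    with \<open>(y \<circ> r) \<longlonglongrightarrow> l\<close> have "l = L xl" by (rule LIMSEQ_unique)
    then show "l \<in> L ` P" using xl by blast
  qed
qed


lemma cone_key:
  fixes \<Gamma> :: "'x::euclidean_space \<Rightarrow> 'z::euclidean_space \<Rightarrow> 'w::euclidean_space set"
  assumes finF: "finite F" and polyF: "\<forall>P\<in>F. polyhedron P" and GF: "graph_sv D \<Gamma> = \<Union>F"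
    and hom: "\<forall>\<xi>\<in>D. \<forall>\<gamma>>0. \<forall>z. \<Gamma> \<xi> (\<gamma> *\<^sub>R z) = (\<lambda>\<eta>. \<gamma> *\<^sub>R \<eta>) ` \<Gamma> \<xi> z"
    and xiD: "\<xi> \<in> D" and xibD: "\<xi>b \<in> D" and eta: "\<eta> \<in> \<Gamma> \<xi> z'"
    and sub: "\<forall>P\<in>F. \<xi> \<in> fst ` P \<longrightarrow> \<xi>b \<in> fst ` P"
  shows "\<eta> \<in> \<Gamma> \<xi>b z'"
proof -
  have memG: "(x, y, w) \<in> graph_sv D \<Gamma> \<longleftrightarrow> x \<in> D \<and> w \<in> \<Gamma> x y" for x y w
    by (simp add: graph_sv_def)
  have clG: "closed (graph_sv D \<Gamma>)" unfolding GF
    using finF polyF by (intro closed_Union) (auto intro: polyhedron_imp_closed)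
  have homs: "\<Gamma> x (s *\<^sub>R y) = (\<lambda>\<eta>. s *\<^sub>R \<eta>) ` \<Gamma> x y" if "x \<in> D" "s > 0" for x s y
    using hom that by blast
  define p where "p k = (\<xi>, (real k + 1) *\<^sub>R z', (real k + 1) *\<^sub>R \<eta>)" for k::nat
  have pG: "p k \<in> \<Union>F" for k
  proof -
    have g: "real k + 1 > 0" by simp
    have "(real k + 1) *\<^sub>R \<eta> \<in> \<Gamma> \<xi> ((real k + 1) *\<^sub>R z')"
      using homs[OF xiD g, of z'] eta by simp
    then have "p k \<in> graph_sv D \<Gamma>" using xiD by (simp add: p_def memG)
    then show ?thesis using GF by simp
  qed
  have Ueq: "(UNIV::nat set) = (\<Union>P\<in>F. {k. p k \<in> P})" using pG by auto
  have "\<exists>P\<in>F. infinite {k. p k \<in> P}"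
  proof (rule ccontr)
    assume "\<not> (\<exists>P\<in>F. infinite {k. p k \<in> P})"
    then have "\<forall>P\<in>F. finite {k. p k \<in> P}" by blast
    then have "finite (\<Union>P\<in>F. {k. p k \<in> P})" using finF by blast
    then show False using Ueq by (metis infinite_UNIV_nat)
  qed
  then obtain P where PF: "P \<in> F" and inf: "infinite {k. p k \<in> P}" by blast
  obtain H where finH: "finite H" and PH: "P = \<Inter>H"
    and hsH: "\<forall>h\<in>H. \<exists>a b. a \<noteq> 0 \<and> h = {x. a \<bullet> x \<le> b}"
  proof -
    have "polyhedron P" using polyF PF by blast
    then show ?thesis using that unfolding polyhedron_def by blast
  qed
  define d where "d = (0::'x, z', \<eta>)"
  define p0 where "p0 = (\<xi>, 0::'z, 0::'w)"
  have pd: "p k = p0 + (real k + 1) *\<^sub>R d" for k by (simp add: p_def p0_def d_def)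
  have rec: "a \<bullet> d \<le> 0" if hH: "{x. a \<bullet> x \<le> b} \<in> H" for a b
  proof (rule ccontr)
    assume "\<not> a \<bullet> d \<le> 0"
    then have pos: "a \<bullet> d > 0" by simp
    obtain m::nat where m: "real m > (b - a \<bullet> p0) / (a \<bullet> d)" using reals_Archimedean2 by blast
    obtain k where km: "k \<ge> m" and kP: "p k \<in> P"
      using inf unfolding infinite_nat_iff_unbounded_le by blast
    have "p k \<in> {x. a \<bullet> x \<le> b}" using kP hH PH by blast
    then have "a \<bullet> p k \<le> b" by simp
    moreover have "a \<bullet> p k = a \<bullet> p0 + (real k + 1) * (a \<bullet> d)" by (simp add: pd inner_add_right)
    moreover have "(real k + 1) * (a \<bullet> d) > b - a \<bullet> p0"
    proof -
      have "real k + 1 > (b - a \<bullet> p0) / (a \<bullet> d)" using m km by linarith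
      then show ?thesis using pos by (simp add: pos_divide_less_eq)
    qed
    ultimately show False by linarith
  qed
  obtain k0 where "p k0 \<in> P" using inf by (metis (mono_tags) not_finite_existsD mem_Collect_eq)
  then have "\<xi> \<in> fst ` P" by (metis fst_conv image_eqI p_def)
  then have "\<xi>b \<in> fst ` P" using sub PF by blast
  then obtain q where qP: "q \<in> P" and qfst: "fst q = \<xi>b" by blast
  have qd: "q + s *\<^sub>R d \<in> P" if s: "s \<ge> 0" for s
    unfolding PH
  proof
    fix h assume hH: "h \<in> H"
    then obtain a b where h: "h = {x. a \<bullet> x \<le> b}" using hsH by blast
    have "q \<in> h" using qP PH hH by blast
    then have "a \<bullet> q \<le> b" by (simp add: h)
    moreover have "s * (a \<bullet> d) \<le> 0" using rec hH h s by (simp add: mult_nonneg_nonpos)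
    ultimately show "q + s *\<^sub>R d \<in> h" by (simp add: h inner_add_right)
  qed
  obtain z0 \<eta>0 where q: "q = (\<xi>b, z0, \<eta>0)" using qfst by (metis prod.collapse)
  define r where "r k = (\<xi>b, inverse (real k + 1) *\<^sub>R z0 + z', inverse (real k + 1) *\<^sub>R \<eta>0 + \<eta>)" for k::nat
  have rG: "r k \<in> graph_sv D \<Gamma>" for k
  proof -
    define s where "s = real k + 1"
    have s: "s > 0" by (simp add: s_def)
    have "q + s *\<^sub>R d \<in> graph_sv D \<Gamma>" using qd[of s] s PF GF by auto
    then have "\<eta>0 + s *\<^sub>R \<eta> \<in> \<Gamma> \<xi>b (z0 + s *\<^sub>R z')" by (simp add: q d_def memG)
    moreover have "z0 + s *\<^sub>R z' = s *\<^sub>R (inverse s *\<^sub>R z0 + z')"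
      using s by (simp add: scaleR_right_distrib)
    ultimately have "\<eta>0 + s *\<^sub>R \<eta> \<in> (\<lambda>\<eta>. s *\<^sub>R \<eta>) ` \<Gamma> \<xi>b (inverse s *\<^sub>R z0 + z')"
      using homs[OF xibD s] by simp
    then obtain w where w: "w \<in> \<Gamma> \<xi>b (inverse s *\<^sub>R z0 + z')" and weq: "\<eta>0 + s *\<^sub>R \<eta> = s *\<^sub>R w"
      by blast
    have "w = inverse s *\<^sub>R (s *\<^sub>R w)" using s by simp
    also have "\<dots> = inverse s *\<^sub>R \<eta>0 + \<eta>" using s by (simp add: weq[symmetric] scaleR_right_distrib)
    finally have "inverse s *\<^sub>R \<eta>0 + \<eta> \<in> \<Gamma> \<xi>b (inverse s *\<^sub>R z0 + z')" using w by simp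
    then show ?thesis using xibD by (simp add: r_def memG s_def)
  qed
  have lim0: "(\<lambda>k. inverse (real k + 1)) \<longlonglongrightarrow> 0"
    using LIMSEQ_inverse_real_of_nat by (simp add: add.commute)
  have "r \<longlonglongrightarrow> (\<xi>b, 0 *\<^sub>R z0 + z', 0 *\<^sub>R \<eta>0 + \<eta>)"
    unfolding r_def by (intro tendsto_intros lim0)
  then have "r \<longlonglongrightarrow> (\<xi>b, z', \<eta>)" by simp
  then have "(\<xi>b, z', \<eta>) \<in> graph_sv D \<Gamma>" using clG rG closed_sequentially by blast
  then show ?thesis by (simp add: memG)
qed

theorem proposition1:
  fixes U D :: "((real^'n) \<times> (real^'p)) set"
    and \<Gamma> :: "(real^'n) \<times> (real^'p) \<Rightarrow> real^'m \<Rightarrow> (real^'q) set"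
    and A :: "(real^'n) \<times> (real^'p) \<Rightarrow> real^'m^'q"
  assumes "open U" and "D \<subseteq> U" and "D \<noteq> {}"
    and "\<forall>\<xi>\<in>D. \<forall>\<gamma>>0. \<forall>z. \<Gamma> \<xi> (\<gamma> *\<^sub>R z) = (\<lambda>\<eta>. \<gamma> *\<^sub>R \<eta>) ` \<Gamma> \<xi> z"
    and "polyhedral_sv D \<Gamma>"
  shows "outer_semicontinuous_sv D \<Gamma> \<and>
    (\<forall>\<xi>b\<in>D.
       closed ((\<lambda>z. A \<xi>b *v z) ` dom_sv (\<Gamma> \<xi>b)) \<and>
       (\<exists>c\<ge>0. \<forall>z\<in>{z \<in> sphere 0 1 \<inter> dom_sv (\<Gamma> \<xi>b). 0 \<in> (\<lambda>h. A \<xi>b *v z + h) ` \<Gamma> \<xi>b z}.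
          \<exists>\<epsilon>>0. \<exists>\<delta>>0. \<forall>\<xi> z'. (\<xi>, z') \<in> (D \<times> sphere 0 1) \<inter> cball (\<xi>b, z) \<epsilon> \<longrightarrow>
             \<Gamma> \<xi> z' \<inter> cball 0 \<delta> \<subseteq>
               {a + b | a b. a \<in> \<Gamma> \<xi>b z' \<and> b \<in> cball 0 (c * norm (\<xi> - \<xi>b))}))"
  proof -
  let ?G = "graph_sv D \<Gamma>"
  obtain F where finF: "finite F" and polyF: "\<forall>P\<in>F. polyhedron P" and GF: "?G = \<Union>F"
    using assms(5) unfolding polyhedral_sv_def by blast
  have memG: "(x, y, w) \<in> ?G \<longleftrightarrow> x \<in> D \<and> w \<in> \<Gamma> x y" for x y w
    by (simp add: graph_sv_def)
  have clG: "closed ?G" unfolding GF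
    using finF polyF by (intro closed_Union) (auto intro: polyhedron_imp_closed)
  have osc: "outer_semicontinuous_sv D \<Gamma>"
    unfolding outer_semicontinuous_sv_def
  proof (intro ballI allI impI)
    fix \<xi> z \<eta>
    assume "\<exists>xs zs ys. (\<forall>k. xs k \<in> D \<and> ys k \<in> \<Gamma> (xs k) (zs k)) \<and>
          xs \<longlonglongrightarrow> \<xi> \<and> zs \<longlonglongrightarrow> z \<and> ys \<longlonglongrightarrow> \<eta>"
    then obtain xs zs ys where h: "\<forall>k. xs k \<in> D \<and> ys k \<in> \<Gamma> (xs k) (zs k)"
      "xs \<longlonglongrightarrow> \<xi>" "zs \<longlonglongrightarrow> z" "ys \<longlonglongrightarrow> \<eta>" by blast
    have B: "(\<lambda>k. (xs k, zs k, ys k)) \<longlonglongrightarrow> (\<xi>, z, \<eta>)" by (intro tendsto_Pair h(2-4))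
    have A: "\<forall>k. (xs k, zs k, ys k) \<in> ?G"
    proof
      fix k
      have "xs k \<in> D" "ys k \<in> \<Gamma> (xs k) (zs k)" using h(1) by auto
      then show "(xs k, zs k, ys k) \<in> ?G" unfolding memG by (rule conjI)
    qed
    have "(\<xi>, z, \<eta>) \<in> ?G" by (rule closed_sequentially[OF clG A[rule_format] B])
    then show "\<eta> \<in> \<Gamma> \<xi> z" by (simp add: memG)
  qed
  have part2: "closed ((\<lambda>z. A \<xi>b *v z) ` dom_sv (\<Gamma> \<xi>b))" if xibD: "\<xi>b \<in> D" for \<xi>b
  proof -
    define f where "f = (\<lambda>p::((real^'n) \<times> (real^'p)) \<times> (real^'m) \<times> (real^'q). A \<xi>b *v fst (snd p))"
    have eq: "(\<lambda>z. A \<xi>b *v z) ` dom_sv (\<Gamma> \<xi>b) = (\<Union>P\<in>F. f ` (P \<inter> {p. fst p = \<xi>b}))"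
    proof
      show "(\<lambda>z. A \<xi>b *v z) ` dom_sv (\<Gamma> \<xi>b) \<subseteq> (\<Union>P\<in>F. f ` (P \<inter> {p. fst p = \<xi>b}))"
      proof
        fix y assume "y \<in> (\<lambda>z. A \<xi>b *v z) ` dom_sv (\<Gamma> \<xi>b)"
        then obtain z where z: "z \<in> dom_sv (\<Gamma> \<xi>b)" and y: "y = A \<xi>b *v z" by blast
        then obtain \<eta> where "\<eta> \<in> \<Gamma> \<xi>b z" unfolding dom_sv_def by blast
        then have "(\<xi>b, z, \<eta>) \<in> ?G" using xibD memG by simp
        then obtain P where "P \<in> F" "(\<xi>b, z, \<eta>) \<in> P" using GF by blast
        moreover have "y = f (\<xi>b, z, \<eta>)" by (simp add: f_def y)
        ultimately show "y \<in> (\<Union>P\<in>F. f ` (P \<inter> {p. fst p = \<xi>b}))" by force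
      qed
      show "(\<Union>P\<in>F. f ` (P \<inter> {p. fst p = \<xi>b})) \<subseteq> (\<lambda>z. A \<xi>b *v z) ` dom_sv (\<Gamma> \<xi>b)"
      proof
        fix y assume "y \<in> (\<Union>P\<in>F. f ` (P \<inter> {p. fst p = \<xi>b}))"
        then obtain P p where PF: "P \<in> F" and pP: "p \<in> P" and pf: "fst p = \<xi>b" and y: "y = f p"
          by blast
        obtain z \<eta> where p: "p = (\<xi>b, z, \<eta>)" using pf by (metis prod.collapse)
        have "p \<in> ?G" using GF PF pP by blast
        then have "\<eta> \<in> \<Gamma> \<xi>b z" using memG p by simp
        then have "z \<in> dom_sv (\<Gamma> \<xi>b)" unfolding dom_sv_def by blast
        moreover have "y = A \<xi>b *v z" by (simp add: y f_def p)
        ultimately show "y \<in> (\<lambda>z. A \<xi>b *v z) ` dom_sv (\<Gamma> \<xi>b)" by blast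
      qed
    qed
    have linf: "linear f"
      unfolding f_def linear_iff by (auto simp: matrix_vector_right_distrib matrix_vector_mult_scaleR)
    have aff: "affine {p::((real^'n) \<times> (real^'p)) \<times> (real^'m) \<times> (real^'q). fst p = \<xi>b}"
      unfolding affine_def
    proof (intro ballI allI impI)
      fix x y :: "((real^'n) \<times> (real^'p)) \<times> (real^'m) \<times> (real^'q)" and u v :: real
      assume "x \<in> {p. fst p = \<xi>b}" "y \<in> {p. fst p = \<xi>b}" "u + v = 1"
      then have "fst (u *\<^sub>R x + v *\<^sub>R y) = u *\<^sub>R \<xi>b + v *\<^sub>R \<xi>b" by simp
      also have "\<dots> = (u + v) *\<^sub>R \<xi>b" by (rule scaleR_add_left[symmetric])
      also have "\<dots> = \<xi>b" using \<open>u + v = 1\<close> by simp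
      finally show "u *\<^sub>R x + v *\<^sub>R y \<in> {p. fst p = \<xi>b}" by simp
    qed
    have "closed (\<Union>P\<in>F. f ` (P \<inter> {p. fst p = \<xi>b}))"
    proof (rule closed_UN[OF finF], rule ballI)
      fix P assume "P \<in> F"
      then have "polyhedron (P \<inter> {p. fst p = \<xi>b})"
        using polyF aff by (intro polyhedron_Int affine_imp_polyhedron[OF aff]) auto
      then show "closed (f ` (P \<inter> {p. fst p = \<xi>b}))"
        by (rule closed_linear_image_polyhedron[OF linf])
    qed
    then show ?thesis using eq by simp
  qed
  have part3: "\<exists>\<epsilon>>0. \<forall>\<xi> z'. (\<xi>, z') \<in> (D \<times> sphere 0 1) \<inter> cball (\<xi>b, z) \<epsilon> \<longrightarrow>
             \<Gamma> \<xi> z' \<subseteq> \<Gamma> \<xi>b z'" if xibD: "\<xi>b \<in> D" for \<xi>b z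
  proof -
    define K where "K = (\<Union>P\<in>{P\<in>F. \<xi>b \<notin> fst ` P}. fst ` P)"
    have "closed K" unfolding K_def
    proof (rule closed_UN, simp add: finF, rule ballI)
      fix P assume "P \<in> {P\<in>F. \<xi>b \<notin> fst ` P}"
      then have "polyhedron P" using polyF by blast
      then show "closed (fst ` P)" by (rule closed_linear_image_polyhedron[OF linear_fst])
    qed
    moreover have "\<xi>b \<notin> K" unfolding K_def by blast
    ultimately obtain e where e: "e > 0" "ball \<xi>b e \<subseteq> - K"
      by (metis open_Compl open_contains_ball ComplI)
    show ?thesis
    proof (intro exI[of _ "e/2"] conjI allI impI)
      show "e/2 > 0" using e by simp
      fix \<xi> z' assume a: "(\<xi>, z') \<in> (D \<times> sphere 0 1) \<inter> cball (\<xi>b, z) (e/2)"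
      then have xiD: "\<xi> \<in> D" by simp
      have "dist \<xi>b \<xi> \<le> dist (\<xi>b, z) (\<xi>, z')" using dist_fst_le[of "(\<xi>b, z)" "(\<xi>, z')"] by simp
      also have "\<dots> \<le> e/2" using a by simp
      finally have "\<xi> \<in> ball \<xi>b e" using e by simp
      then have "\<xi> \<notin> K" using e by blast
      then have sub: "\<forall>P\<in>F. \<xi> \<in> fst ` P \<longrightarrow> \<xi>b \<in> fst ` P" unfolding K_def by blast
      show "\<Gamma> \<xi> z' \<subseteq> \<Gamma> \<xi>b z'"
      proof
        fix \<eta> assume "\<eta> \<in> \<Gamma> \<xi> z'"
        then show "\<eta> \<in> \<Gamma> \<xi>b z'"
          using cone_key[OF finF polyF GF assms(4) xiD xibD _ sub] by blast
      qed
    qed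
  qed
  show ?thesis
  proof (intro conjI osc ballI)
    fix \<xi>b assume xibD: "\<xi>b \<in> D"
    show "closed ((\<lambda>z. A \<xi>b *v z) ` dom_sv (\<Gamma> \<xi>b))" using part2[OF xibD] .
    show "\<exists>c\<ge>0. \<forall>z\<in>{z \<in> sphere 0 1 \<inter> dom_sv (\<Gamma> \<xi>b). 0 \<in> (\<lambda>h. A \<xi>b *v z + h) ` \<Gamma> \<xi>b z}.
          \<exists>\<epsilon>>0. \<exists>\<delta>>0. \<forall>\<xi> z'. (\<xi>, z') \<in> (D \<times> sphere 0 1) \<inter> cball (\<xi>b, z) \<epsilon> \<longrightarrow>
             \<Gamma> \<xi> z' \<inter> cball 0 \<delta> \<subseteq>
               {a + b | a b. a \<in> \<Gamma> \<xi>b z' \<and> b \<in> cball 0 (c * norm (\<xi> - \<xi>b))}"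
    proof (rule exI[of _ 0], intro conjI order_refl ballI)
      fix z
      obtain \<epsilon> where \<epsilon>: "\<epsilon> > 0" and h: "\<forall>\<xi> z'. (\<xi>, z') \<in> (D \<times> sphere 0 1) \<inter> cball (\<xi>b, z) \<epsilon> \<longrightarrow>
             \<Gamma> \<xi> z' \<subseteq> \<Gamma> \<xi>b z'" using part3[OF xibD, of z] by blast
      show "\<exists>\<epsilon>>0. \<exists>\<delta>>0. \<forall>\<xi> z'. (\<xi>, z') \<in> (D \<times> sphere 0 1) \<inter> cball (\<xi>b, z) \<epsilon> \<longrightarrow>
             \<Gamma> \<xi> z' \<inter> cball 0 \<delta> \<subseteq>
               {a + b | a b. a \<in> \<Gamma> \<xi>b z' \<and> b \<in> cball 0 (0 * norm (\<xi> - \<xi>b))}"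
      proof (rule exI[of _ \<epsilon>], rule conjI[OF \<epsilon>], rule exI[of _ \<epsilon>], rule conjI[OF \<epsilon>], intro allI impI subsetI)
        fix \<xi> z' \<eta>
        assume a: "(\<xi>, z') \<in> (D \<times> sphere 0 1) \<inter> cball (\<xi>b, z) \<epsilon>"
          and b: "\<eta> \<in> \<Gamma> \<xi> z' \<inter> cball 0 \<epsilon>"
        have "\<eta> \<in> \<Gamma> \<xi>b z'" using h a b by blast
        then show "\<eta> \<in> {a + b | a b. a \<in> \<Gamma> \<xi>b z' \<and> b \<in> cball 0 (0 * norm (\<xi> - \<xi>b))}"
          by (intro CollectI exI[of _ \<eta>] exI[of _ "0::real^'q"]) simp
      qed
    qed
  qed
qed

end
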